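(* In the standing setup, assume $A$ is generic and $\det f_0'(x)$ is not identically zero. Then $p_0=q_1+q_2+q_3$. Define $s_1=1-2\varepsilon^2(q_2+q_3)$, $s_2=1-2\varepsilon^2(q_1+q_3)$, $s_3=1-2\varepsilon^2(q_1+q_2)$, $s_0=1$, and (for $\varepsilon\ne0$) $P_0=\tfrac14\big(\tfrac1{s_0}+\tfrac1{s_1}+\tfrac1{s_2}+\tfrac1{s_3}\big)$, $Q_1=\tfrac1{4\varepsilon^2}\big(-\tfrac1{s_0}-\tfrac1{s_1}+\tfrac1{s_2}+\tfrac1{s_3}\big)$, $Q_2=\tfrac1{4\varepsilon^2}\big(-\tfrac1{s_0}+\tfrac1{s_1}-\tfrac1{s_2}+\tfrac1{s_3}\big)$, $Q_3=\tfrac1{4\varepsilon^2}\big(-\tfrac1{s_0}+\tfrac1{s_1}+\tfrac1{s_2}-\tfrac1{s_3}\big)$. Then at every $x$ with $s_1(x,\varepsilon)s_2(x,\varepsilon)s_3(x,\varepsilon)\neq0$, the matrix $\Pi(x)=J-\varepsilon^2(f_0'(x))^2J$ is invertible and $$\Pi(x)^{-1}=-P_0(x,\varepsilon)J-\varepsilon^2\sum_{i=1}^3Q_i(x,\varepsilon)B_iJ.$$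
   Context: Standing setup: $J=\begin{pmatrix}0&I_3\\-I_3&0\end{pmatrix}$ ($6\times6$). $A$ is a fixed real $6\times 6$ skew-Hamiltonian matrix ($A^{\rm T}J=JA$). $H_0$ is a homogeneous cubic polynomial on $\mathbb R^6$ with $A\nabla^2H_0(x)=\nabla^2H_0(x)A^{\rm T}$ for all $x$ ($\nabla^2$ = Hesse matrix), $f_0=J\nabla H_0$, with Jacobi matrix $f_0'$. Genericity: the characteristic polynomial of $A$ (a square of a cubic) has three pairwise distinct roots $\lambda_1,\lambda_2,\lambda_3$, each a double eigenvalue. $B_i=\alpha_iI+\beta_iA+\gamma_iA^2$ ($i=1,2,3$), where $\alpha_i+\beta_i\lambda+\gamma_i\lambda^2$ is the unique polynomial of degree $\le2$ equal to $-1$ at $\lambda_i$ and to $1$ at the other two eigenvalues. $p_0(x)=\tfrac18\operatorname{tr}(f_0'(x))^2$, $q_i(x)=\tfrac18\operatorname{tr}(B_i^{\rm T}(f_0'(x))^2)$. *)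

theory Defs
  imports "HOL-Analysis.Analysis"
begin

type_synonym rvec = "real ^ 6"
type_synonym rmat = "real ^ 6 ^ 6"
type_synonym cmat = "complex ^ 6 ^ 6"

text \<open>Indices of type 6 are represented by 0..5 via Rep_bit0; indices 0,1,2 are q, 3,4,5 are p.
  J = [[0, I3], [-I3, 0]].\<close>
definition Jmat :: "'a::ring_1 ^ 6 ^ 6" where
  "Jmat = (\<chi> i j. if Rep_bit0 j = Rep_bit0 i + 3 then 1
                   else if Rep_bit0 i = Rep_bit0 j + 3 then - 1 else 0)"

definition partial :: "(real ^ 6 \<Rightarrow> real) \<Rightarrow> 6 \<Rightarrow> real ^ 6 \<Rightarrow> real" where
  "partial F i x = deriv (\<lambda>t. F (x + t *\<^sub>R axis i 1)) 0"

definition grad :: "(real ^ 6 \<Rightarrow> real) \<Rightarrow> real ^ 6 \<Rightarrow> real ^ 6" where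
  "grad F x = (\<chi> i. partial F i x)"

definition jacobian :: "(real ^ 6 \<Rightarrow> real ^ 6) \<Rightarrow> real ^ 6 \<Rightarrow> real ^ 6 ^ 6" where
  "jacobian F x = (\<chi> i j. partial (\<lambda>y. F y $ i) j x)"

definition hesse :: "(real ^ 6 \<Rightarrow> real) \<Rightarrow> real ^ 6 \<Rightarrow> real ^ 6 ^ 6" where
  "hesse F x = jacobian (grad F) x"

definition homogeneous_cubic :: "(real ^ 6 \<Rightarrow> real) \<Rightarrow> bool" where
  "homogeneous_cubic H \<longleftrightarrow> (\<exists>c :: 6 \<Rightarrow> 6 \<Rightarrow> 6 \<Rightarrow> real.
      \<forall>x. H x = (\<Sum>i\<in>UNIV. \<Sum>j\<in>UNIV. \<Sum>k\<in>UNIV. c i j k * x $ i * x $ j * x $ k))"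

definition skew_hamiltonian :: "real ^ 6 ^ 6 \<Rightarrow> bool" where
  "skew_hamiltonian A \<longleftrightarrow> transpose A ** Jmat = Jmat ** A"

definition cpx :: "real ^ 6 ^ 6 \<Rightarrow> complex ^ 6 ^ 6" where
  "cpx M = (\<chi> i j. complex_of_real (M $ i $ j))"

definition cscale :: "complex \<Rightarrow> complex ^ 6 ^ 6 \<Rightarrow> complex ^ 6 ^ 6" where
  "cscale c M = (\<chi> i j. c * M $ i $ j)"

definition f0 :: "(real ^ 6 \<Rightarrow> real) \<Rightarrow> real ^ 6 \<Rightarrow> real ^ 6" where
  "f0 H x = Jmat *v grad H x"

definition f0' :: "(real ^ 6 \<Rightarrow> real) \<Rightarrow> real ^ 6 \<Rightarrow> real ^ 6 ^ 6" where
  "f0' H x = jacobian (f0 H) x"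

definition Bmat :: "real ^ 6 ^ 6 \<Rightarrow> complex \<Rightarrow> complex \<Rightarrow> complex \<Rightarrow> complex ^ 6 ^ 6" where
  "Bmat A a b c = cscale a (mat 1) + cscale b (cpx A) + cscale c (cpx (A ** A))"

definition p0 :: "(real ^ 6 \<Rightarrow> real) \<Rightarrow> real ^ 6 \<Rightarrow> real" where
  "p0 H x = trace (f0' H x ** f0' H x) / 8"

definition qfun :: "complex ^ 6 ^ 6 \<Rightarrow> (real ^ 6 \<Rightarrow> real) \<Rightarrow> real ^ 6 \<Rightarrow> complex" where
  "qfun Bi H x = trace (transpose Bi ** cpx (f0' H x ** f0' H x)) / 8"

end

theory Submission
  imports Defs
begin

lemma Rep6: "Rep_bit0 (0::6) = 0" "Rep_bit0 (1::6) = 1" "Rep_bit0 (2::6) = 2"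
  "Rep_bit0 (3::6) = 3" "Rep_bit0 (4::6) = 4" "Rep_bit0 (5::6) = 5"
  by (simp_all add: bit0.Rep_numeral bit0.Rep_0 bit0.Rep_1)
lemma UNIV6: "(UNIV::6 set) = {0,1,2,3,4,5}"
proof -
  { fix x :: 6
    have "Rep_bit0 x \<in> {0..<6}" using bit0.Rep_less_n[of x] bit0.Rep_le_n[of x] Rep_bit0[of x] by simp
    hence "Rep_bit0 x \<in> {0,1,2,3,4,5}" by auto
    hence "x \<in> {0,1,2,3,4,5}" using Rep6 by (auto simp: Rep_bit0_inject[symmetric]) }
  thus ?thesis by blast
qed
lemma dist6: "(0::6) \<noteq> 1" "(0::6) \<noteq> 2" "(0::6) \<noteq> 3" "(0::6) \<noteq> 4" "(0::6) \<noteq> 5"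
  "(1::6) \<noteq> 2" "(1::6) \<noteq> 3" "(1::6) \<noteq> 4" "(1::6) \<noteq> 5"
  "(2::6) \<noteq> 3" "(2::6) \<noteq> 4" "(2::6) \<noteq> 5" "(3::6) \<noteq> 4" "(3::6) \<noteq> 5" "(4::6) \<noteq> 5"
  by (simp_all only: Rep_bit0_inject[symmetric] Rep6)
lemma sum6: "(\<Sum>i\<in>(UNIV::6 set). f i) = f 0 + f 1 + f 2 + f 3 + f 4 + f 5"
  unfolding UNIV6 using dist6 by (simp add: add.assoc)
lemma forall6: "(\<forall>i::6. P i) \<longleftrightarrow> P 0 \<and> P 1 \<and> P 2 \<and> P 3 \<and> P 4 \<and> P 5"
  using UNIV6 by (metis UNIV_I insertE empty_iff)

definition skH :: "'a::comm_ring_1^6^6 \<Rightarrow> bool" where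
  "skH X \<longleftrightarrow> transpose X ** Jmat = Jmat ** X"

lemma Jent: "(Jmat::'a::ring_1^6^6) $ i $ j = (if Rep_bit0 j = Rep_bit0 i + 3 then 1
                   else if Rep_bit0 i = Rep_bit0 j + 3 then - 1 else 0)"
  by (simp add: Jmat_def)

lemma skH_rel:
  fixes X :: "complex^6^6"
  assumes "skH X"
  shows "X$0$3 = 0" "X$1$4 = 0" "X$2$5 = 0" "X$1$3 = - X$0$4" "X$2$3 = - X$0$5" "X$2$4 = - X$1$5"
        "X$3$0 = 0" "X$4$1 = 0" "X$5$2 = 0" "X$3$1 = - X$4$0" "X$3$2 = - X$5$0" "X$4$2 = - X$5$1"
        "X$3$3 = X$0$0" "X$3$4 = X$1$0" "X$3$5 = X$2$0"
        "X$4$3 = X$0$1" "X$4$4 = X$1$1" "X$4$5 = X$2$1"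
        "X$5$3 = X$0$2" "X$5$4 = X$1$2" "X$5$5 = X$2$2"
proof -
  have e: "\<And>i j. (transpose X ** Jmat)$i$j = (Jmat ** X)$i$j" using assms by (simp add: skH_def)
  note d = matrix_matrix_mult_def transpose_def sum6 Jent Rep6
  show "X$0$3 = 0" using e[of 3 3] by (simp add: d)
  show "X$1$4 = 0" using e[of 4 4] by (simp add: d)
  show "X$2$5 = 0" using e[of 5 5] by (simp add: d)
  show "X$1$3 = - X$0$4" using e[of 3 4] by (simp add: d)
  show "X$2$3 = - X$0$5" using e[of 3 5] by (simp add: d)
  show "X$2$4 = - X$1$5" using e[of 4 5] by (simp add: d)
  show "X$3$0 = 0" using e[of 0 0] by (simp add: d)
  show "X$4$1 = 0" using e[of 1 1] by (simp add: d)
  show "X$5$2 = 0" using e[of 2 2] by (simp add: d)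
  show "X$3$1 = - X$4$0" using e[of 0 1] by (simp add: d)
  show "X$3$2 = - X$5$0" using e[of 0 2] by (simp add: d)
  show "X$4$2 = - X$5$1" using e[of 1 2] by (simp add: d)
  show "X$3$3 = X$0$0" using e[of 0 3] by (simp add: d)
  show "X$3$4 = X$1$0" using e[of 0 4] by (simp add: d)
  show "X$3$5 = X$2$0" using e[of 0 5] by (simp add: d)
  show "X$4$3 = X$0$1" using e[of 1 3] by (simp add: d)
  show "X$4$4 = X$1$1" using e[of 1 4] by (simp add: d)
  show "X$4$5 = X$2$1" using e[of 1 5] by (simp add: d)
  show "X$5$3 = X$0$2" using e[of 2 3] by (simp add: d)
  show "X$5$4 = X$1$2" using e[of 2 4] by (simp add: d)
  show "X$5$5 = X$2$2" using e[of 2 5] by (simp add: d)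
qed

lemma mat6: "(mat c :: 'a::zero^6^6) $ i $ j = (if i = j then c else 0)"
  by (simp add: mat_def)
lemma BCH_ent: fixes X :: "complex^6^6"
  assumes h: "skH X"
  shows "\<forall>i k. 48 * (X**X**X)$i$k - 24 * trace X * (X**X)$i$k + (6*(trace X)^2 - 12*trace (X**X)) * X$i$k
     - ((trace X)^3 - 6*trace X*trace (X**X) + 8*trace (X**X**X)) * mat 1 $ i $ k = 0"
  unfolding forall6
  apply (simp only: mat6 dist6 dist6[symmetric] if_True if_False simp_thms)
  apply (simp only: matrix_matrix_mult_def trace_def sum6 vec_lambda_beta skH_rel[OF h])
  apply (simp only: mult_zero_left mult_zero_right add_0_left add_0_right mult_minus_left mult_minus_right minus_minus diff_0_right)
  apply (intro conjI)
  by algebra+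

lemma BCH2_ent: fixes X Y :: "complex^6^6"
  assumes h: "skH X" and g: "skH Y"
  shows "\<forall>i k. 48 * ((X**X**Y)$i$k + (X**Y**X)$i$k + (Y**X**X)$i$k) - 24 * trace Y * (X**X)$i$k
     - 24 * trace X * ((X**Y)$i$k + (Y**X)$i$k) + (12 * trace X * trace Y - 24 * trace (X**Y)) * X$i$k
     + (6*(trace X)^2 - 12*trace (X**X)) * Y$i$k
     - (3*(trace X)^2 * trace Y - 6 * trace Y * trace (X**X) - 12 * trace X * trace (X**Y) + 24 * trace (X**X**Y)) * mat 1 $ i $ k = 0"
  unfolding forall6
  apply (simp only: mat6 dist6 dist6[symmetric] if_True if_False simp_thms)
  apply (simp only: matrix_matrix_mult_def trace_def sum6 vec_lambda_beta skH_rel[OF h] skH_rel[OF g])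
  apply (simp only: mult_zero_left mult_zero_right add_0_left add_0_right mult_minus_left mult_minus_right minus_minus diff_0_right)
  apply (intro conjI)
  by algebra+

lemma mm_rdistrib: "((A::'a::semiring_1^'n^'m) + B) ** C = A ** C + B ** C"
  by (simp add: matrix_matrix_mult_def vec_eq_iff distrib_right sum.distrib)
lemma mm_ldiff: "(A::'a::ring_1^'n^'m) ** (B - C) = A ** B - A ** C"
  by (simp add: matrix_matrix_mult_def vec_eq_iff right_diff_distrib sum_subtractf)
lemma mm_rdiff: "((A::'a::ring_1^'n^'m) - B) ** C = A ** C - B ** C"
  by (simp add: matrix_matrix_mult_def vec_eq_iff left_diff_distrib sum_subtractf)
lemma mm_uminus_left: "(- (A::'a::ring_1^'n^'m)) ** B = - (A ** B)"
  by (simp add: matrix_matrix_mult_def vec_eq_iff sum_negf)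
lemma mm_uminus_right: "(A::'a::ring_1^'n^'m) ** (- B) = - (A ** B)"
  by (simp add: matrix_matrix_mult_def vec_eq_iff sum_negf)

lemma cs_mul_left: "cscale c X ** Y = cscale c (X ** Y)"
  by (simp add: cscale_def matrix_matrix_mult_def vec_eq_iff sum_distrib_left mult.assoc)
lemma cs_mul_right: "X ** cscale c Y = cscale c (X ** Y)"
  by (simp add: cscale_def matrix_matrix_mult_def vec_eq_iff sum_distrib_left mult.left_commute)
lemma cs_add: "cscale c (X + Y) = cscale c X + cscale c Y"
  by (simp add: cscale_def vec_eq_iff distrib_left)
lemma cs_diff: "cscale c (X - Y) = cscale c X - cscale c Y"
  by (simp add: cscale_def vec_eq_iff right_diff_distrib)
lemma cs_uminus: "cscale c (- X) = - cscale c X"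
  by (simp add: cscale_def vec_eq_iff)
lemma cs_add2: "cscale (c + d) X = cscale c X + cscale d X"
  by (simp add: cscale_def vec_eq_iff distrib_right)
lemma cs_diff2: "cscale (c - d) X = cscale c X - cscale d X"
  by (simp add: cscale_def vec_eq_iff left_diff_distrib)
lemma cs_neg2: "cscale (- c) X = - cscale c X"
  by (simp add: cscale_def vec_eq_iff)
lemma cs_cs: "cscale c (cscale d X) = cscale (c * d) X"
  by (simp add: cscale_def vec_eq_iff mult.assoc)
lemma cs_one: "cscale 1 X = X"
  by (simp add: cscale_def vec_eq_iff)
lemma cs_zero: "cscale 0 X = 0"
  by (simp add: cscale_def vec_eq_iff)
lemma cs_zero2: "cscale c 0 = 0"
  by (simp add: cscale_def vec_eq_iff)
lemma mat_cs: "mat c = cscale c (mat 1)"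
  by (simp add: cscale_def vec_eq_iff mat_def)
lemma trace_cs: "trace (cscale c X) = c * trace X"
  by (simp add: cscale_def trace_def sum_distrib_left)
lemma transpose_cs: "transpose (cscale c X) = cscale c (transpose X)"
  by (simp add: cscale_def transpose_def vec_eq_iff)
lemma transpose_add: "transpose ((X::'a::semiring_1^'n^'n) + Y) = transpose X + transpose Y"
  by (simp add: transpose_def vec_eq_iff)
lemma transpose_diff: "transpose ((X::'a::ring_1^'n^'n) - Y) = transpose X - transpose Y"
  by (simp add: transpose_def vec_eq_iff)
lemma transpose_uminus: "transpose (- (X::'a::ring_1^'n^'n)) = - transpose X"
  by (simp add: transpose_def vec_eq_iff)
lemma trace_transpose: "trace (transpose (X::'a::semiring_1^'n^'n)) = trace X"
  by (simp add: trace_def transpose_def)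
lemma trace_uminus: "trace (- (X::'a::ring_1^'n^'n)) = - trace X"
  by (simp add: trace_def sum_negf)
lemma trace_mat1: "trace (mat 1 :: complex^6^6) = 6"
  by (simp add: trace_def mat_def)

lemma cpx_mul: "cpx (X ** Y) = cpx X ** cpx Y"
  by (simp add: cpx_def matrix_matrix_mult_def vec_eq_iff)
lemma cpx_transpose: "cpx (transpose X) = transpose (cpx X)"
  by (simp add: cpx_def transpose_def vec_eq_iff)
lemma cpx_add: "cpx (X + Y) = cpx X + cpx Y"
  by (simp add: cpx_def vec_eq_iff)
lemma cpx_diff: "cpx (X - Y) = cpx X - cpx Y"
  by (simp add: cpx_def vec_eq_iff)
lemma cpx_scaleR: "cpx (r *\<^sub>R X) = cscale (complex_of_real r) (cpx X)"
  by (simp add: cpx_def cscale_def vec_eq_iff)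
lemma cpx_mat1: "cpx (mat 1) = mat 1"
  by (simp add: cpx_def mat_def vec_eq_iff)
lemma cpx_J: "cpx Jmat = Jmat"
  by (simp add: cpx_def Jmat_def vec_eq_iff)
lemma trace_cpx: "trace (cpx X) = complex_of_real (trace X)"
  by (simp add: cpx_def trace_def)
lemma det_cpx: "det (cpx X) = complex_of_real (det X)"
  by (simp add: cpx_def det_def of_real_sum of_real_prod)
lemma cpx_inj: "cpx X = cpx Y \<Longrightarrow> X = Y"
  by (simp add: cpx_def vec_eq_iff)

lemma JJ: "(Jmat::complex^6^6) ** Jmat = - mat 1"
  unfolding vec_eq_iff forall6
  by (simp add: matrix_matrix_mult_def sum6 Jent Rep6 mat6 dist6 dist6[symmetric])
lemma JT: "transpose (Jmat::complex^6^6) = - Jmat"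
  unfolding vec_eq_iff forall6
  by (simp add: transpose_def Jent Rep6)

definition Pm :: "complex^6^6 \<Rightarrow> complex \<Rightarrow> complex \<Rightarrow> complex \<Rightarrow> complex^6^6" where
  "Pm A a b c = cscale a (mat 1) + cscale b A + cscale c (A ** A)"

lemmas csl = cs_add cs_diff cs_uminus cs_add2 cs_diff2 cs_neg2 cs_cs cs_one cs_zero cs_zero2
  cs_mul_left cs_mul_right

lemma Pm_add: "Pm A a b c + Pm A a' b' c' = Pm A (a+a') (b+b') (c+c')"
  unfolding Pm_def by (simp add: csl algebra_simps)
lemma Pm_diff: "Pm A a b c - Pm A a' b' c' = Pm A (a-a') (b-b') (c-c')"
  unfolding Pm_def by (simp add: csl algebra_simps)
lemma Pm_cs: "cscale k (Pm A a b c) = Pm A (k*a) (k*b) (k*c)"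
  unfolding Pm_def by (simp add: csl algebra_simps)
lemma Pm_I: "mat 1 = Pm A 1 0 0"
  unfolding Pm_def by (simp add: csl)
lemma Pm_A: "A = Pm A 0 1 0"
  unfolding Pm_def by (simp add: csl)
lemma Pm_mulA:
  assumes A3: "A ** (A ** A) = cscale e1 (A ** A) - cscale e2 A + cscale e3 (mat 1)"
  shows "A ** Pm A a b c = Pm A (c*e3) (a - c*e2) (b + c*e1)"
  unfolding Pm_def by (simp add: csl matrix_add_ldistrib A3 algebra_simps)
lemma Pm_comm:
  assumes "A ** N = N ** A"
  shows "Pm A a b c ** N = N ** Pm A a b c"
proof -
  have "(A ** A) ** N = N ** (A ** A)"
    by (metis assms matrix_mul_assoc)
  thus ?thesis unfolding Pm_def
    by (simp add: csl matrix_add_ldistrib mm_rdistrib assms)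
qed
lemma Pm_skH:
  assumes "skH A"
  shows "skH (Pm A a b c)"
proof -
  have a: "transpose A ** Jmat = Jmat ** A" using assms by (simp add: skH_def)
  have "transpose (A ** A) ** Jmat = Jmat ** (A ** A)"
    by (metis a matrix_mul_assoc matrix_transpose_mul)
  thus ?thesis unfolding skH_def Pm_def
    by (simp add: csl transpose_add transpose_cs matrix_add_ldistrib mm_rdistrib a)
qed
lemma trace_Pm: "trace (Pm A a b c) = 6*a + b * trace A + c * trace (A ** A)"
  unfolding Pm_def by (simp add: trace_add trace_cs trace_mat1)

lemma Pm_mul:
  assumes A3: "A ** (A ** A) = cscale e1 (A ** A) - cscale e2 A + cscale e3 (mat 1)"
  shows "Pm A a b c ** Y = cscale a Y + cscale b (A ** Y) + cscale c (A ** (A ** Y))"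
  unfolding Pm_def by (simp add: csl mm_rdistrib matrix_mul_assoc)

lemma Q3:
  fixes a b c z1 z2 z3 :: complex
  assumes "a * z1^2 + b * z1 + c = 0" "a * z2^2 + b * z2 + c = 0" "a * z3^2 + b * z3 + c = 0"
    "z1 \<noteq> z2" "z1 \<noteq> z3" "z2 \<noteq> z3"
  shows "a = 0 \<and> b = 0 \<and> c = 0"
proof -
  have e1: "(z1 - z2) * (a * (z1+z2) + b) = 0" using assms(1,2) by algebra
  have e2: "(z1 - z3) * (a * (z1+z3) + b) = 0" using assms(1,3) by algebra
  have f1: "a * (z1+z2) + b = 0" using e1 assms(4) by simp
  have f2: "a * (z1+z3) + b = 0" using e2 assms(5) by simp
  have "(z2 - z3) * a = 0" using f1 f2 by algebra
  hence a: "a = 0" using assms(6) by simp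
  hence b: "b = 0" using f1 by simp
  show ?thesis using a b assms(1) by simp
qed

lemma lagrange_eig:
  fixes u v w l1 l2 l3 :: complex
  assumes d: "l1 \<noteq> l2" "l1 \<noteq> l3" "l2 \<noteq> l3"
    and h1: "u + v * l1 + w * l1^2 = 1" and h2: "u + v * l2 + w * l2^2 = 0" and h3: "u + v * l3 + w * l3^2 = 0"
  shows "w * (l1 * l2 * l3) = l1 * u \<and> u - w * (l1 * l2+l1 * l3+l2 * l3) = l1 * v \<and> v + w * (l1+l2+l3) = l1 * w"
proof -
  let ?a = "l1 * w - v - w * (l1+l2+l3)" and ?b = "w * (l1 * l2+l1 * l3+l2 * l3) - u + l1 * v"
    and ?c = "l1 * u - w * (l1 * l2 * l3)"
  have gen: "\<And>z. ?a * z^2 + ?b * z + ?c = w * ((z-l1) * (z-l2) * (z-l3)) - (z-l1) * (u+v * z+w * z^2)"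
    by algebra
  have "?a * l1^2 + ?b * l1 + ?c = 0" unfolding gen by simp
  moreover have "?a * l2^2 + ?b * l2 + ?c = 0" unfolding gen using h2 by simp
  moreover have "?a * l3^2 + ?b * l3 + ?c = 0" unfolding gen using h3 by simp
  ultimately have A: "?a = 0 \<and> ?b = 0 \<and> ?c = 0" using Q3 d by blast
  have A1: "?a = 0" and A2: "?b = 0" and A3: "?c = 0" using A by auto
  show ?thesis
    apply (intro conjI)
    subgoal using A3 by algebra
    subgoal using A2 by algebra
    subgoal using A1 by algebra
    done
qed

lemma cubic_roots:
  fixes e1 e2 e3 l1 l2 l3 :: complex
  assumes d: "l1 \<noteq> l2" "l1 \<noteq> l3" "l2 \<noteq> l3"
    and r: "\<And>z. z = l1 \<or> z = l2 \<or> z = l3 \<Longrightarrow> z^3 - e1 * z^2 + e2 * z - e3 = 0"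
  shows "e1 = l1+l2+l3 \<and> e2 = l1 * l2+l1 * l3+l2 * l3 \<and> e3 = l1 * l2 * l3"
proof -
  let ?a = "l1+l2+l3 - e1" and ?b = "e2 - (l1 * l2+l1 * l3+l2 * l3)" and ?c = "l1 * l2 * l3 - e3"
  have gen: "\<And>z. ?a * z^2 + ?b * z + ?c = (z^3 - e1 * z^2 + e2 * z - e3) - (z-l1) * (z-l2) * (z-l3)"
    by algebra
  have "?a * l1^2 + ?b * l1 + ?c = 0" unfolding gen using r by simp
  moreover have "?a * l2^2 + ?b * l2 + ?c = 0" unfolding gen using r by simp
  moreover have "?a * l3^2 + ?b * l3 + ?c = 0" unfolding gen using r by simp
  ultimately have A: "?a = 0 \<and> ?b = 0 \<and> ?c = 0" using Q3 d by blast
  have A1: "?a = 0" and A2: "?b = 0" and A3: "?c = 0" using A by auto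
  show ?thesis
    apply (intro conjI)
    subgoal using A1 by algebra
    subgoal using A2 by algebra
    subgoal using A3 by algebra
    done
qed

lemma axis_comp: "(x + t *\<^sub>R axis j (1::real)) $ i = x $ i + t * (if i = j then 1 else 0)"
  by (simp add: axis_def)

definition dl :: "6 \<Rightarrow> 6 \<Rightarrow> real" where "dl i j = (if i = j then 1 else 0)"

definition Gf :: "(6 \<Rightarrow> 6 \<Rightarrow> 6 \<Rightarrow> real) \<Rightarrow> 6 \<Rightarrow> real^6 \<Rightarrow> real" where
  "Gf c l y = (\<Sum>a\<in>UNIV. \<Sum>b\<in>UNIV. \<Sum>d\<in>UNIV. c a b d *
      (dl a l * y $ b * y $ d + y $ a * dl b l * y $ d + y $ a * y $ b * dl d l))"

definition Hf :: "(6 \<Rightarrow> 6 \<Rightarrow> 6 \<Rightarrow> real) \<Rightarrow> 6 \<Rightarrow> 6 \<Rightarrow> real^6 \<Rightarrow> real" where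
  "Hf c i l y = (\<Sum>a\<in>UNIV. \<Sum>b\<in>UNIV. \<Sum>d\<in>UNIV. c a b d *
      (dl a i * (dl b l * y $ d + y $ b * dl d l) + dl b i * (dl a l * y $ d + y $ a * dl d l)
       + dl d i * (dl a l * y $ b + y $ a * dl b l)))"

lemma axis_dl: "(x + t *\<^sub>R axis j (1::real)) $ i = x $ i + t * dl i j"
  by (simp add: axis_def dl_def)

lemma grad_cubic:
  fixes c :: "6 \<Rightarrow> 6 \<Rightarrow> 6 \<Rightarrow> real"
  assumes H: "\<And>y. H y = (\<Sum>i\<in>UNIV. \<Sum>j\<in>UNIV. \<Sum>k\<in>UNIV. c i j k * y $ i * y $ j * y $ k)"
  shows "partial H l y = Gf c l y"
proof -
  have "((\<lambda>t. H (y + t *\<^sub>R axis l 1)) has_field_derivative Gf c l y) (at 0)"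
    unfolding H axis_dl Gf_def
    apply (rule derivative_eq_intros refl)+
    apply (intro sum.cong refl)
    apply (simp add: algebra_simps)
    done
  thus ?thesis unfolding partial_def by (rule DERIV_imp_deriv)
qed

lemma hesse_cubic:
  fixes c :: "6 \<Rightarrow> 6 \<Rightarrow> 6 \<Rightarrow> real"
  assumes H: "\<And>y. H y = (\<Sum>i\<in>UNIV. \<Sum>j\<in>UNIV. \<Sum>k\<in>UNIV. c i j k * y $ i * y $ j * y $ k)"
  shows "partial (\<lambda>y. grad H y $ i) l x = Hf c i l x"
proof -
  have g: "(\<lambda>y. grad H y $ i) = Gf c i" using grad_cubic[OF H] by (simp add: grad_def fun_eq_iff)
  have "((\<lambda>t. Gf c i (x + t *\<^sub>R axis l 1)) has_field_derivative Hf c i l x) (at 0)"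
    unfolding axis_dl Gf_def Hf_def
    apply (rule derivative_eq_intros refl)+
    apply (intro sum.cong refl)
    apply (simp add: algebra_simps)
    done
  thus ?thesis unfolding partial_def g by (rule DERIV_imp_deriv)
qed

lemma hesse_eq:
  assumes H: "\<And>y. H y = (\<Sum>i\<in>UNIV. \<Sum>j\<in>UNIV. \<Sum>k\<in>UNIV. c i j k * y $ i * y $ j * y $ k)"
  shows "hesse H x = (\<chi> i l. Hf c i l x)"
  by (simp add: hesse_def jacobian_def hesse_cubic[OF H])

lemma Hf_sym: "Hf c i l x = Hf c l i x"
  unfolding Hf_def by (intro sum.cong refl) (simp add: algebra_simps)

lemma hesse_sym:
  assumes "homogeneous_cubic H"
  shows "transpose (hesse H x) = hesse H x"
proof -
  obtain c where H: "\<And>y. H y = (\<Sum>i\<in>UNIV. \<Sum>j\<in>UNIV. \<Sum>k\<in>UNIV. c i j k * y $ i * y $ j * y $ k)"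
    using assms unfolding homogeneous_cubic_def by blast
  show ?thesis unfolding hesse_eq[OF H] transpose_def by (simp add: Hf_sym)
qed

lemma f0'_eq:
  assumes "homogeneous_cubic H"
  shows "f0' H x = Jmat ** hesse H x"
proof -
  obtain c where H: "\<And>y. H y = (\<Sum>i\<in>UNIV. \<Sum>j\<in>UNIV. \<Sum>k\<in>UNIV. c i j k * y $ i * y $ j * y $ k)"
    using assms unfolding homogeneous_cubic_def by blast
  have g: "\<And>y k. grad H y $ k = Gf c k y" using grad_cubic[OF H] by (simp add: grad_def)
  have "\<And>i l. partial (\<lambda>y. f0 H y $ i) l x = (\<Sum>k\<in>UNIV. Jmat $ i $ k * Hf c k l x)"
  proof -
    fix i l
    have "((\<lambda>t. f0 H (x + t *\<^sub>R axis l 1) $ i) has_field_derivative (\<Sum>k\<in>UNIV. Jmat $ i $ k * Hf c k l x)) (at 0)"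
      unfolding f0_def matrix_vector_mult_def vec_lambda_beta g axis_dl Gf_def Hf_def
      apply (rule derivative_eq_intros refl)+
      apply (intro sum.cong refl)
      apply (simp add: algebra_simps)
      done
    thus "partial (\<lambda>y. f0 H y $ i) l x = (\<Sum>k\<in>UNIV. Jmat $ i $ k * Hf c k l x)"
      unfolding partial_def by (rule DERIV_imp_deriv)
  qed
  thus ?thesis unfolding f0'_def jacobian_def hesse_eq[OF H] matrix_matrix_mult_def by simp
qed

lemma lin48: fixes a t b q x u m :: complex
  shows "48 * a = 24*t*b - (6*t^2 - 12*q)*x + (t^3 - 6*t*q + 8*u)*m \<Longrightarrow>
   a = (t/2)*b - (t^2/8 - q/4)*x + ((t^3 - 6*t*q + 8*u)/48)*m"
proof -
  assume h: "48 * a = 24*t*b - (6*t^2 - 12*q)*x + (t^3 - 6*t*q + 8*u)*m"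
  have "a = (48 * a) / 48" by simp
  also have "\<dots> = (24*t*b - (6*t^2 - 12*q)*x + (t^3 - 6*t*q + 8*u)*m) / 48" by (simp only: h)
  also have "\<dots> = (t/2)*b - (t^2/8 - q/4)*x + ((t^3 - 6*t*q + 8*u)/48)*m"
    by (simp add: field_simps)
  finally show ?thesis .
qed

lemma BCH_mat:
  fixes X :: "complex^6^6"
  assumes h: "skH X"
  shows "X ** (X ** X) = cscale (trace X / 2) (X ** X) - cscale ((trace X)^2/8 - trace (X ** X)/4) X
     + cscale (((trace X)^3 - 6*trace X*trace (X ** X) + 8*trace (X ** X ** X))/48) (mat 1)"
proof -
  have e: "\<And>i k. 48 * (X**X**X)$i$k - 24 * trace X * (X**X)$i$k + (6*(trace X)^2 - 12*trace (X**X)) * X$i$k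
     - ((trace X)^3 - 6*trace X*trace (X**X) + 8*trace (X**X**X)) * mat 1 $ i $ k = 0"
    using BCH_ent[OF h] by blast
  show ?thesis
    unfolding vec_eq_iff
  proof (intro allI)
    fix i k
    have "(X ** (X ** X)) $ i $ k = (X**X**X)$i$k" by (simp add: matrix_mul_assoc)
    thus "(X ** (X ** X)) $ i $ k = (cscale (trace X / 2) (X ** X) - cscale ((trace X)^2/8 - trace (X ** X)/4) X
     + cscale (((trace X)^3 - 6*trace X*trace (X ** X) + 8*trace (X ** X ** X))/48) (mat 1)) $ i $ k"
    proof -
      have "48 * (X**X**X)$i$k = 24 * trace X * (X**X)$i$k - (6*(trace X)^2 - 12*trace (X**X)) * X$i$k
        + ((trace X)^3 - 6*trace X*trace (X**X) + 8*trace (X**X**X)) * mat 1 $ i $ k"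
        using e[of i k] by (simp add: algebra_simps)
      from lin48[OF this] show ?thesis using \<open>(X ** (X ** X)) $ i $ k = (X**X**X)$i$k\<close>
        unfolding cscale_def by simp
    qed
  qed
qed

lemma det_mat6: "det (mat c :: complex^6^6) = c^6"
  by (subst det_diagonal) (simp_all add: mat_def)

lemma root_det:
  fixes A :: "complex^6^6"
  assumes A3: "A ** (A ** A) = cscale e1 (A ** A) - cscale e2 A + cscale e3 (mat 1)"
    and d: "det (mat z - A) = 0"
  shows "z^3 - e1*z^2 + e2*z - e3 = 0"
proof -
  let ?R = "Pm A (z^2 - e1*z + e2) (z - e1) 1"
  have "(mat z - A) ** ?R = cscale z ?R - A ** ?R"
    by (simp add: mm_rdiff mat_cs[of z] cs_mul_left)
  also have "\<dots> = Pm A (z * (z^2 - e1*z + e2) - e3) (z*(z - e1) - ((z^2 - e1*z + e2) - e2)) (z - (z - e1 + e1))"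
    by (simp add: Pm_mulA[OF A3] Pm_cs Pm_diff)
  also have "\<dots> = Pm A (z^3 - e1*z^2 + e2*z - e3) 0 0"
  proof -
    have c1: "z * (z^2 - e1*z + e2) - e3 = z^3 - e1*z^2 + e2*z - e3"
      by (simp add: algebra_simps power2_eq_square power3_eq_cube)
    have c2: "z*(z - e1) - ((z^2 - e1*z + e2) - e2) = 0"
      by (simp add: algebra_simps power2_eq_square)
    have c3: "z - (z - e1 + e1) = 0" by simp
    show ?thesis by (simp only: c1 c2 c3)
  qed
  also have "\<dots> = mat (z^3 - e1*z^2 + e2*z - e3)"
    by (simp add: Pm_def cs_zero mat_cs[of "z^3 - e1*z^2 + e2*z - e3"])
  finally have "det (mat z - A) * det ?R = (z^3 - e1*z^2 + e2*z - e3)^6"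
    by (metis det_mul det_mat6)
  thus ?thesis using d by simp
qed

lemma A_struct:
  fixes A :: "real^6^6" and lam :: "nat \<Rightarrow> complex"
  assumes skewH: "skew_hamiltonian A"
    and charpoly: "\<And>z::complex. det (mat z - cpx A) = ((z - lam 1) * (z - lam 2) * (z - lam 3))^2"
    and d: "lam 1 \<noteq> lam 2" "lam 1 \<noteq> lam 3" "lam 2 \<noteq> lam 3"
  defines "rho1 \<equiv> lam 1 + lam 2 + lam 3" and "rho2 \<equiv> lam 1 * lam 2 + lam 1 * lam 3 + lam 2 * lam 3"
    and "rho3 \<equiv> lam 1 * lam 2 * lam 3"
  shows "skH (cpx A)"
    "cpx A ** (cpx A ** cpx A) = cscale rho1 (cpx A ** cpx A) - cscale rho2 (cpx A) + cscale rho3 (mat 1)"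
    "trace (cpx A) = 2 * rho1" "trace (cpx A ** cpx A) = 2 * rho1^2 - 4 * rho2"
proof -
  show sk: "skH (cpx A)" using skewH unfolding skH_def skew_hamiltonian_def
    by (metis cpx_mul cpx_transpose cpx_J)
  let ?X = "cpx A"
  define e1 where "e1 = trace ?X / 2"
  define e2 where "e2 = (trace ?X)^2/8 - trace (?X ** ?X)/4"
  define e3 where "e3 = ((trace ?X)^3 - 6*trace ?X*trace (?X ** ?X) + 8*trace (?X ** ?X ** ?X))/48"
  have A3: "?X ** (?X ** ?X) = cscale e1 (?X ** ?X) - cscale e2 ?X + cscale e3 (mat 1)"
    unfolding e1_def e2_def e3_def by (rule BCH_mat[OF sk])
  have r: "z^3 - e1*z^2 + e2*z - e3 = 0" if "z = lam 1 \<or> z = lam 2 \<or> z = lam 3" for z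
    by (rule root_det[OF A3]) (use that charpoly in auto)
  have e: "e1 = rho1 \<and> e2 = rho2 \<and> e3 = rho3"
    unfolding rho1_def rho2_def rho3_def by (rule cubic_roots[OF d r])
  show "?X ** (?X ** ?X) = cscale rho1 (?X ** ?X) - cscale rho2 ?X + cscale rho3 (mat 1)"
    using A3 e by simp
  show t1: "trace ?X = 2 * rho1" using e unfolding e1_def by simp
  have "rho2 = (2 * rho1)^2/8 - trace (?X ** ?X)/4" using e t1 unfolding e2_def by simp
  thus "trace (?X ** ?X) = 2 * rho1^2 - 4 * rho2" by (simp add: field_simps power2_eq_square)
qed

lemma Pi_eig:
  fixes A :: "complex^6^6"
  assumes A3: "A ** (A ** A) = cscale r1 (A ** A) - cscale r2 A + cscale r3 (mat 1)"
    and r: "r1 = l1 + l2 + l3" "r2 = l1 * l2 + l1 * l3 + l2 * l3" "r3 = l1 * l2 * l3"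
    and d: "l1 \<noteq> l2" "l1 \<noteq> l3" "l2 \<noteq> l3"
    and h1: "u + v * l1 + w * l1^2 = 1" and h2: "u + v * l2 + w * l2^2 = 0"
    and h3: "u + v * l3 + w * l3^2 = 0"
    and t1: "trace A = 2 * r1" and t2: "trace (A ** A) = 2 * r1^2 - 4 * r2"
  shows "A ** Pm A u v w = cscale l1 (Pm A u v w)" "trace (Pm A u v w) = 2"
proof -
  have L: "w * (l1 * l2 * l3) = l1 * u \<and> u - w * (l1 * l2 + l1 * l3 + l2 * l3) = l1 * v \<and> v + w * (l1 + l2 + l3) = l1 * w"
    by (rule lagrange_eig[OF d h1 h2 h3])
  have "A ** Pm A u v w = Pm A (w * r3) (u - w * r2) (v + w * r1)"
    by (rule Pm_mulA[OF A3])
  also have "\<dots> = Pm A (l1 * u) (l1 * v) (l1 * w)"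
  proof -
    have "w * r3 = l1 * u" "u - w * r2 = l1 * v" "v + w * r1 = l1 * w" using L r by auto
    thus ?thesis by simp
  qed
  also have "\<dots> = cscale l1 (Pm A u v w)" by (simp add: Pm_cs)
  finally show "A ** Pm A u v w = cscale l1 (Pm A u v w)" .
  have "trace (Pm A u v w) = 6*u + v * (2 * r1) + w * (2 * r1^2 - 4 * r2)"
    by (simp add: trace_Pm t1 t2)
  also have "\<dots> = 2" using h1 h2 h3 r by algebra
  finally show "trace (Pm A u v w) = 2" .
qed

lemma interp_facts:
  fixes lam \<alpha> \<beta> \<gamma> :: "nat \<Rightarrow> complex"
  assumes d: "lam 1 \<noteq> lam 2" "lam 1 \<noteq> lam 3" "lam 2 \<noteq> lam 3"
    and interp: "\<And>i j. i \<in> {1,2,3} \<Longrightarrow> j \<in> {1,2,3} \<Longrightarrow>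
                   \<alpha> i + \<beta> i * lam j + \<gamma> i * (lam j)^2 = (if i = j then - 1 else 1)"
  shows "\<alpha> 1 + \<alpha> 2 + \<alpha> 3 = 1" "\<beta> 1 + \<beta> 2 + \<beta> 3 = 0" "\<gamma> 1 + \<gamma> 2 + \<gamma> 3 = 0"
proof -
  let ?a = "\<gamma> 1 + \<gamma> 2 + \<gamma> 3" and ?b = "\<beta> 1 + \<beta> 2 + \<beta> 3" and ?c = "\<alpha> 1 + \<alpha> 2 + \<alpha> 3 - 1"
  have g: "?a * z^2 + ?b * z + ?c = (\<alpha> 1 + \<beta> 1 * z + \<gamma> 1 * z^2) + (\<alpha> 2 + \<beta> 2 * z + \<gamma> 2 * z^2)
     + (\<alpha> 3 + \<beta> 3 * z + \<gamma> 3 * z^2) - 1" for z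
    by (simp add: algebra_simps)
  have "?a * (lam 1)^2 + ?b * lam 1 + ?c = 0" unfolding g using interp[of _ 1] by simp
  moreover have "?a * (lam 2)^2 + ?b * lam 2 + ?c = 0" unfolding g using interp[of _ 2] by simp
  moreover have "?a * (lam 3)^2 + ?b * lam 3 + ?c = 0" unfolding g using interp[of _ 3] by simp
  ultimately have "?a = 0 \<and> ?b = 0 \<and> ?c = 0" using Q3 d by blast
  thus "\<alpha> 1 + \<alpha> 2 + \<alpha> 3 = 1" "\<beta> 1 + \<beta> 2 + \<beta> 3 = 0" "\<gamma> 1 + \<gamma> 2 + \<gamma> 3 = 0" by simp_all
qed

lemma N_struct:
  fixes A S :: "complex^6^6"
  assumes sym: "transpose S = S" and com: "A ** S = S ** transpose A"
    and sk: "transpose A ** Jmat = Jmat ** A"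
  defines "N \<equiv> S ** Jmat ** S ** Jmat"
  shows "skH N" "A ** N = N ** A" "transpose N = (Jmat ** S) ** (Jmat ** S)"
proof -
  have r1: "A ** (S ** X) = S ** (transpose A ** X)" for X
    by (metis com matrix_mul_assoc)
  have r2: "transpose A ** (Jmat ** X) = Jmat ** (A ** X)" for X
    by (metis sk matrix_mul_assoc)
  show "A ** N = N ** A" unfolding N_def
    by (simp add: matrix_mul_assoc[symmetric] r1 r2 sk)
  show tN: "transpose N = (Jmat ** S) ** (Jmat ** S)" unfolding N_def
    by (simp add: matrix_transpose_mul JT sym mm_uminus_left mm_uminus_right matrix_mul_assoc)
  show "skH N" unfolding skH_def tN unfolding N_def
    by (simp add: matrix_mul_assoc)
qed

lemma N_Pi:
  fixes A N P :: "complex^6^6"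
  assumes skA: "skH A" and skN: "skH N" and AN: "A ** N = N ** A"
    and AP: "A ** P = cscale l P"
    and t1: "trace A = 2 * r1" and t2: "trace (A ** A) = 2 * r1^2 - 4 * r2"
    and q: "3 * l^2 - 2 * r1 * l + r2 \<noteq> 0"
  shows "\<exists>c. N ** P = cscale c P"
proof -
  define W where "W = N ** P"
  define u1 where "u1 = trace N"
  define u2 where "u2 = trace (A ** N)"
  define ka where "ka = 3*(trace A)^2 * trace N - 6 * trace N * trace (A**A) - 12 * trace A * trace (A**N) + 24 * trace (A**A**N)"
  define Z where "Z = cscale 48 (A**A**N + A**N**A + N**A**A) - cscale (24 * u1) (A**A)
     - cscale (24 * trace A) (A**N + N**A) + cscale (12 * trace A * u1 - 24 * u2) A
     + cscale (6*(trace A)^2 - 12*trace (A**A)) N - cscale ka (mat 1)"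
  have Z0: "Z = 0"
    using BCH2_ent[OF skA skN] unfolding Z_def u1_def u2_def ka_def vec_eq_iff cscale_def
    by (simp add: algebra_simps)
  have AW: "A ** W = cscale l W"
    unfolding W_def by (metis AN AP cs_mul_right matrix_mul_assoc)
  have T1: "(A**A**N) ** P = cscale (l*l) W"
    by (metis AW W_def cs_cs cs_mul_right matrix_mul_assoc)
  have T2: "(A**N**A) ** P = cscale (l*l) W"
    by (metis AW AP W_def cs_cs cs_mul_right matrix_mul_assoc)
  have T3: "(N**A**A) ** P = cscale (l*l) W"
    by (metis AP W_def cs_cs cs_mul_right matrix_mul_assoc)
  have T4: "(A**A) ** P = cscale (l*l) P"
    by (metis AP cs_cs cs_mul_right matrix_mul_assoc)
  have T5: "(A**N) ** P = cscale l W"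
    by (metis AW W_def matrix_mul_assoc)
  have T6: "(N**A) ** P = cscale l W"
    by (metis AP W_def cs_mul_right matrix_mul_assoc)
  have ZP: "Z ** P = cscale 48 (cscale (l*l) W + cscale (l*l) W + cscale (l*l) W) - cscale (24 * u1) (cscale (l*l) P)
     - cscale (24 * trace A) (cscale l W + cscale l W) + cscale (12 * trace A * u1 - 24 * u2) (cscale l P)
     + cscale (6*(trace A)^2 - 12*trace (A**A)) W - cscale ka P"
    unfolding Z_def
    by (simp only: mm_rdistrib mm_rdiff cs_mul_left T1 T2 T3 T4 T5 T6 AP W_def[symmetric] matrix_mul_lid)
  let ?q = "48 * (3 * l^2 - 2 * r1 * l + r2)"
  let ?r = "24 * u1 * l * l - (12 * trace A * u1 - 24 * u2) * l + ka"
  have "W = cscale (?r / ?q) P"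
    unfolding vec_eq_iff
  proof (intro allI)
    fix i k
    have "(Z ** P) $ i $ k = 0" using Z0 by simp
    hence e: "48 * (l*l*W$i$k + l*l*W$i$k + l*l*W$i$k) - 24 * u1 * (l*l*P$i$k) - 24 * trace A * (l*W$i$k + l*W$i$k)
       + (12 * trace A * u1 - 24 * u2) * (l * P$i$k) + (6*(trace A)^2 - 12*trace (A**A)) * W$i$k - ka * P$i$k = 0"
      unfolding ZP by (simp add: cscale_def mult.assoc)
    have "?q * W$i$k = ?r * P$i$k"
      using e unfolding t1 t2 by algebra
    moreover have "?q \<noteq> 0" using q by (metis mult_eq_0_iff zero_neq_numeral)
    ultimately show "W $ i $ k = cscale (?r / ?q) P $ i $ k"
      by (simp add: cscale_def field_simps)
  qed
  thus ?thesis unfolding W_def by blast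
qed

lemma skH_add: "skH X \<Longrightarrow> skH Y \<Longrightarrow> skH (X + Y)"
  by (simp add: skH_def transpose_add mm_rdistrib matrix_add_ldistrib)
lemma skH_cs: "skH X \<Longrightarrow> skH (cscale c X)"
  by (simp add: skH_def transpose_cs cs_mul_left cs_mul_right)

lemma final:
  fixes M :: "real^6^6" and \<epsilon> :: real and q1 q2 q3 c1 c2 c3 :: complex
    and Nc P1 P2 P3 B1 B2 B3 :: "complex^6^6"
  assumes eps: "\<epsilon> \<noteq> 0"
    and MN: "cpx (M ** M) = transpose Nc"
    and B: "B1 = mat 1 - cscale 2 P1" "B2 = mat 1 - cscale 2 P2" "B3 = mat 1 - cscale 2 P3"
    and sumP: "P1 + P2 + P3 = mat 1"
    and NP: "Nc ** P1 = cscale c1 P1" "Nc ** P2 = cscale c2 P2" "Nc ** P3 = cscale c3 P3"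
    and PN: "P1 ** Nc = Nc ** P1" "P2 ** Nc = Nc ** P2" "P3 ** Nc = Nc ** P3"
    and skP: "skH P1" "skH P2" "skH P3"
    and qc: "q2 + q3 = c1/2" "q1 + q3 = c2/2" "q1 + q2 = c3/2"
  shows "(let e2 = complex_of_real (\<epsilon>^2);
           s0 = 1;
           s1 = 1 - 2 * e2 * (q2 + q3);
           s2 = 1 - 2 * e2 * (q1 + q3);
           s3 = 1 - 2 * e2 * (q1 + q2);
           P0 = (1/s0 + 1/s1 + 1/s2 + 1/s3) / 4;
           Q1 = (- 1/s0 - 1/s1 + 1/s2 + 1/s3) / (4 * e2);
           Q2 = (- 1/s0 + 1/s1 - 1/s2 + 1/s3) / (4 * e2);
           Q3 = (- 1/s0 + 1/s1 + 1/s2 - 1/s3) / (4 * e2);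
           Pi = Jmat - (\<epsilon>^2) *\<^sub>R (M ** M ** Jmat)
       in s1 * s2 * s3 \<noteq> 0 \<longrightarrow>
          invertible Pi \<and>
          cpx (matrix_inv Pi) =
            cscale (- P0) Jmat
            - cscale e2 (cscale Q1 (B1 ** Jmat) + cscale Q2 (B2 ** Jmat) + cscale Q3 (B3 ** Jmat)))"
  unfolding Let_def
proof (intro impI)
  define e2 where "e2 = complex_of_real (\<epsilon>^2)"
  define s1 where "s1 = 1 - 2 * e2 * (q2 + q3)"
  define s2 where "s2 = 1 - 2 * e2 * (q1 + q3)"
  define s3 where "s3 = 1 - 2 * e2 * (q1 + q2)"
  define P0 where "P0 = (1/1 + 1/s1 + 1/s2 + 1/s3) / 4"
  define Q1 where "Q1 = (- 1/1 - 1/s1 + 1/s2 + 1/s3) / (4 * e2)"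
  define Q2 where "Q2 = (- 1/1 + 1/s1 - 1/s2 + 1/s3) / (4 * e2)"
  define Q3 where "Q3 = (- 1/1 + 1/s1 + 1/s2 - 1/s3) / (4 * e2)"
  define Pim where "Pim = Jmat - (\<epsilon>^2) *\<^sub>R (M ** M ** Jmat)"
  define RHS where "RHS = cscale (- P0) Jmat
            - cscale e2 (cscale Q1 (B1 ** Jmat) + cscale Q2 (B2 ** Jmat) + cscale Q3 (B3 ** Jmat))"
  assume "(1 - 2 * complex_of_real (\<epsilon>^2) * (q2 + q3)) * (1 - 2 * complex_of_real (\<epsilon>^2) * (q1 + q3))
      * (1 - 2 * complex_of_real (\<epsilon>^2) * (q1 + q2)) \<noteq> 0"
  hence sne: "s1 \<noteq> 0" "s2 \<noteq> 0" "s3 \<noteq> 0" unfolding s1_def s2_def s3_def e2_def by auto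
  have e2ne: "e2 \<noteq> 0" using eps unfolding e2_def by simp
  have s1c: "s1 = 1 - e2 * c1" unfolding s1_def qc by simp
  have s2c: "s2 = 1 - e2 * c2" unfolding s2_def qc by simp
  have s3c: "s3 = 1 - e2 * c3" unfolding s3_def qc by simp
  define Yc where "Yc = cscale P0 (mat 1) + cscale e2 (cscale Q1 B1 + cscale Q2 B2 + cscale Q3 B3)"
  have RHSY: "RHS = - (Yc ** Jmat)"
    unfolding RHS_def Yc_def by (simp add: csl mm_rdistrib algebra_simps)
  have Yc_P: "Yc = cscale (1/s1) P1 + cscale (1/s2) P2 + cscale (1/s3) P3"
  proof -
    have c1: "P0 + e2 * (- Q1 + Q2 + Q3) = 1/s1" and c2: "P0 + e2 * (Q1 - Q2 + Q3) = 1/s2"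
      and c3: "P0 + e2 * (Q1 + Q2 - Q3) = 1/s3"
      unfolding P0_def Q1_def Q2_def Q3_def using e2ne by (simp_all add: field_simps)
    show ?thesis unfolding Yc_def B sumP[symmetric] vec_eq_iff
    proof (intro allI)
      fix i k
      show "(cscale P0 (P1 + P2 + P3) + cscale e2 (cscale Q1 (P1 + P2 + P3 - cscale 2 P1) + cscale Q2 (P1 + P2 + P3 - cscale 2 P2) +
            cscale Q3 (P1 + P2 + P3 - cscale 2 P3))) $ i $ k =
         (cscale (1 / s1) P1 + cscale (1 / s2) P2 + cscale (1 / s3) P3) $ i $ k"
        unfolding cscale_def c1[symmetric] c2[symmetric] c3[symmetric] by (simp add: algebra_simps)
    qed
  qed
  have YN: "Yc ** (mat 1 - cscale e2 Nc) = mat 1"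
  proof -
    have "Yc ** (mat 1 - cscale e2 Nc) = P1 + P2 + P3"
      unfolding Yc_P
      apply (simp add: mm_rdistrib mm_ldiff cs_mul_left cs_mul_right PN NP cs_cs)
      unfolding vec_eq_iff
    proof (intro allI)
      fix i k
      have g: "(1/s) * p - e2 * ((c/s) * p) = p" if "s = 1 - e2 * c" "s \<noteq> 0" for s c p
        using that apply (simp add: field_simps) by algebra
      have "(cscale (1 / s1) P1 + cscale (1 / s2) P2 + cscale (1 / s3) P3 -
         cscale e2 (cscale (c1 / s1) P1 + cscale (c2 / s2) P2 + cscale (c3 / s3) P3)) $ i $ k
         = ((1/s1) * P1$i$k - e2 * ((c1/s1) * P1$i$k)) + ((1/s2) * P2$i$k - e2 * ((c2/s2) * P2$i$k))
          + ((1/s3) * P3$i$k - e2 * ((c3/s3) * P3$i$k))"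
        unfolding cscale_def by (simp add: algebra_simps)
      also have "\<dots> = (P1 + P2 + P3) $ i $ k"
        using g[OF s1c sne(1)] g[OF s2c sne(2)] g[OF s3c sne(3)] by simp
      finally show "(cscale (1 / s1) P1 + cscale (1 / s2) P2 + cscale (1 / s3) P3 -
         cscale e2 (cscale (c1 / s1) P1 + cscale (c2 / s2) P2 + cscale (c3 / s3) P3)) $ i $ k
         = (P1 + P2 + P3) $ i $ k" .
    qed
    thus ?thesis using sumP by simp
  qed
  have skY: "skH Yc" unfolding Yc_P by (intro skH_add skH_cs skP)
  hence JY: "Jmat ** Yc = transpose Yc ** Jmat" unfolding skH_def by simp
  have cMM: "cpx (M ** M ** Jmat) = transpose Nc ** Jmat" by (metis cpx_mul MN cpx_J)
  have cPi: "cpx Pim = transpose (mat 1 - cscale e2 Nc) ** Jmat"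
    unfolding Pim_def e2_def
    by (simp add: cpx_diff cpx_scaleR cMM cpx_J transpose_diff transpose_cs mm_rdiff cs_mul_left)
  have prod: "cpx Pim ** RHS = mat 1"
  proof -
    have "cpx Pim ** RHS = - (transpose (mat 1 - cscale e2 Nc) ** ((Jmat ** Yc) ** Jmat))"
      unfolding cPi RHSY by (simp add: mm_uminus_right matrix_mul_assoc)
    also have "\<dots> = transpose (mat 1 - cscale e2 Nc) ** transpose Yc"
      unfolding JY by (simp add: matrix_mul_assoc[symmetric] JJ mm_uminus_right)
    also have "\<dots> = transpose (Yc ** (mat 1 - cscale e2 Nc))" by (simp add: matrix_transpose_mul)
    finally show ?thesis unfolding YN by simp
  qed
  have "det (cpx Pim) * det RHS = 1" using prod by (metis det_mul det_I)
  hence "det (cpx Pim) \<noteq> 0" by auto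
  hence "det Pim \<noteq> 0" unfolding det_cpx by simp
  hence inv: "invertible Pim" by (simp add: invertible_det_nz)
  hence "Pim ** matrix_inv Pim = mat 1 \<and> matrix_inv Pim ** Pim = mat 1"
    unfolding invertible_def matrix_inv_def by (rule someI_ex)
  hence li: "matrix_inv Pim ** Pim = mat 1" by simp
  have "cpx (matrix_inv Pim) = cpx (matrix_inv Pim) ** (cpx Pim ** RHS)" using prod by simp
  also have "\<dots> = RHS" by (simp add: matrix_mul_assoc cpx_mul[symmetric] li cpx_mat1)
  finally have "cpx (matrix_inv Pim) = RHS" .
  thus "invertible (Jmat - (\<epsilon>^2) *\<^sub>R (M ** M ** Jmat)) \<and>
    cpx (matrix_inv (Jmat - (\<epsilon>^2) *\<^sub>R (M ** M ** Jmat))) =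
    cscale (- ((1 / 1 + 1 / (1 - 2 * complex_of_real (\<epsilon>^2) * (q2 + q3)) + 1 / (1 - 2 * complex_of_real (\<epsilon>^2) * (q1 + q3)) +
               1 / (1 - 2 * complex_of_real (\<epsilon>^2) * (q1 + q2))) / 4)) Jmat -
    cscale (complex_of_real (\<epsilon>^2))
     (cscale ((- 1 / 1 - 1 / (1 - 2 * complex_of_real (\<epsilon>^2) * (q2 + q3)) + 1 / (1 - 2 * complex_of_real (\<epsilon>^2) * (q1 + q3)) +
               1 / (1 - 2 * complex_of_real (\<epsilon>^2) * (q1 + q2))) / (4 * complex_of_real (\<epsilon>^2))) (B1 ** Jmat) +
      cscale ((- 1 / 1 + 1 / (1 - 2 * complex_of_real (\<epsilon>^2) * (q2 + q3)) - 1 / (1 - 2 * complex_of_real (\<epsilon>^2) * (q1 + q3)) +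
               1 / (1 - 2 * complex_of_real (\<epsilon>^2) * (q1 + q2))) / (4 * complex_of_real (\<epsilon>^2))) (B2 ** Jmat) +
      cscale ((- 1 / 1 + 1 / (1 - 2 * complex_of_real (\<epsilon>^2) * (q2 + q3)) + 1 / (1 - 2 * complex_of_real (\<epsilon>^2) * (q1 + q3)) -
               1 / (1 - 2 * complex_of_real (\<epsilon>^2) * (q1 + q2))) / (4 * complex_of_real (\<epsilon>^2))) (B3 ** Jmat))"
    using inv unfolding Pim_def RHS_def P0_def Q1_def Q2_def Q3_def s1_def s2_def s3_def e2_def by simp
qed

theorem mainTheorem15:
  fixes A :: "real ^ 6 ^ 6" and H0 :: "real ^ 6 \<Rightarrow> real"
    and lam \<alpha> \<beta> \<gamma> :: "nat \<Rightarrow> complex"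
  assumes skewH: "skew_hamiltonian A"
    and cubic: "homogeneous_cubic H0"
    and commute: "\<And>x. A ** hesse H0 x = hesse H0 x ** transpose A"
    and charpoly: "\<And>z::complex. det (mat z - cpx A)
                     = ((z - lam 1) * (z - lam 2) * (z - lam 3))^2"
    and distinct: "lam 1 \<noteq> lam 2" "lam 1 \<noteq> lam 3" "lam 2 \<noteq> lam 3"
    and interp: "\<And>i j. i \<in> {1,2,3} \<Longrightarrow> j \<in> {1,2,3} \<Longrightarrow>
                   \<alpha> i + \<beta> i * lam j + \<gamma> i * (lam j)^2 = (if i = j then - 1 else 1)"
    and nondeg: "\<exists>x. det (f0' H0 x) \<noteq> 0"
  defines "B \<equiv> \<lambda>i. Bmat A (\<alpha> i) (\<beta> i) (\<gamma> i)"
    and "q \<equiv> \<lambda>i. qfun (Bmat A (\<alpha> i) (\<beta> i) (\<gamma> i)) H0"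
  shows "(\<forall>x. complex_of_real (p0 H0 x) = q 1 x + q 2 x + q 3 x) \<and>
    (\<forall>(\<epsilon>::real) x. \<epsilon> \<noteq> 0 \<longrightarrow>
      (let e2 = complex_of_real (\<epsilon>^2);
           s0 = 1;
           s1 = 1 - 2 * e2 * (q 2 x + q 3 x);
           s2 = 1 - 2 * e2 * (q 1 x + q 3 x);
           s3 = 1 - 2 * e2 * (q 1 x + q 2 x);
           P0 = (1/s0 + 1/s1 + 1/s2 + 1/s3) / 4;
           Q1 = (- 1/s0 - 1/s1 + 1/s2 + 1/s3) / (4 * e2);
           Q2 = (- 1/s0 + 1/s1 - 1/s2 + 1/s3) / (4 * e2);
           Q3 = (- 1/s0 + 1/s1 + 1/s2 - 1/s3) / (4 * e2);
           Pi = Jmat - (\<epsilon>^2) *\<^sub>R (f0' H0 x ** f0' H0 x ** Jmat)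
       in s1 * s2 * s3 \<noteq> 0 \<longrightarrow>
          invertible Pi \<and>
          cpx (matrix_inv Pi) =
            cscale (- P0) Jmat
            - cscale e2 (cscale Q1 (B 1 ** Jmat) + cscale Q2 (B 2 ** Jmat) + cscale Q3 (B 3 ** Jmat))))"
proof -
  let ?Ac = "cpx A"
  define r1 where "r1 = lam 1 + lam 2 + lam 3"
  define r2 where "r2 = lam 1 * lam 2 + lam 1 * lam 3 + lam 2 * lam 3"
  define r3 where "r3 = lam 1 * lam 2 * lam 3"
  note AS = A_struct[OF skewH charpoly distinct(1) distinct(2) distinct(3)]
  have skA: "skH ?Ac" using AS(1) .
  have A3: "?Ac ** (?Ac ** ?Ac) = cscale r1 (?Ac ** ?Ac) - cscale r2 ?Ac + cscale r3 (mat 1)"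
    using AS(2) unfolding r1_def r2_def r3_def .
  have t1: "trace ?Ac = 2 * r1" using AS(3) unfolding r1_def .
  have t2: "trace (?Ac ** ?Ac) = 2 * r1^2 - 4 * r2" using AS(4) unfolding r1_def r2_def .
  note I1 = interp_facts[OF distinct interp]
  define Pi where "Pi j = Pm ?Ac ((1 - \<alpha> j)/2) (- \<beta> j/2) (- \<gamma> j/2)" for j
  have lag: "(1 - \<alpha> j)/2 + (- \<beta> j/2) * lam k + (- \<gamma> j/2) * (lam k)^2 = (if j = k then 1 else 0)"
    if "j \<in> {1,2,3}" "k \<in> {1,2,3}" for j k
  proof -
    have "(1 - \<alpha> j)/2 + (- \<beta> j/2) * lam k + (- \<gamma> j/2) * (lam k)^2
        = (1 - (\<alpha> j + \<beta> j * lam k + \<gamma> j * (lam k)^2))/2" by (simp add: field_simps)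
    also have "\<dots> = (1 - (if j = k then - 1 else 1))/2" by (simp only: interp[OF that])
    also have "\<dots> = (if j = k then 1 else 0)" by simp
    finally show ?thesis .
  qed
  have l11: "(1 - \<alpha> 1)/2 + (- \<beta> 1/2) * lam 1 + (- \<gamma> 1/2) * (lam 1)^2 = 1" using lag[of 1 1] by simp
  have l12: "(1 - \<alpha> 1)/2 + (- \<beta> 1/2) * lam 2 + (- \<gamma> 1/2) * (lam 2)^2 = 0" using lag[of 1 2] by simp
  have l13: "(1 - \<alpha> 1)/2 + (- \<beta> 1/2) * lam 3 + (- \<gamma> 1/2) * (lam 3)^2 = 0" using lag[of 1 3] by simp
  have l21: "(1 - \<alpha> 2)/2 + (- \<beta> 2/2) * lam 1 + (- \<gamma> 2/2) * (lam 1)^2 = 0" using lag[of 2 1] by simp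
  have l22: "(1 - \<alpha> 2)/2 + (- \<beta> 2/2) * lam 2 + (- \<gamma> 2/2) * (lam 2)^2 = 1" using lag[of 2 2] by simp
  have l23: "(1 - \<alpha> 2)/2 + (- \<beta> 2/2) * lam 3 + (- \<gamma> 2/2) * (lam 3)^2 = 0" using lag[of 2 3] by simp
  have l31: "(1 - \<alpha> 3)/2 + (- \<beta> 3/2) * lam 1 + (- \<gamma> 3/2) * (lam 1)^2 = 0" using lag[of 3 1] by simp
  have l32: "(1 - \<alpha> 3)/2 + (- \<beta> 3/2) * lam 2 + (- \<gamma> 3/2) * (lam 2)^2 = 0" using lag[of 3 2] by simp
  have l33: "(1 - \<alpha> 3)/2 + (- \<beta> 3/2) * lam 3 + (- \<gamma> 3/2) * (lam 3)^2 = 1" using lag[of 3 3] by simp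
  have d: "lam 1 \<noteq> lam 2" "lam 1 \<noteq> lam 3" "lam 2 \<noteq> lam 3" using distinct by auto
  have E1: "?Ac ** Pi 1 = cscale (lam 1) (Pi 1)" "trace (Pi 1) = 2"
    unfolding Pi_def
    by (rule Pi_eig[OF A3 r1_def r2_def r3_def d l11 l12 l13 t1 t2])+
  have E2: "?Ac ** Pi 2 = cscale (lam 2) (Pi 2)" "trace (Pi 2) = 2"
  proof -
    have r: "r1 = lam 2 + lam 1 + lam 3" "r2 = lam 2 * lam 1 + lam 2 * lam 3 + lam 1 * lam 3"
      "r3 = lam 2 * lam 1 * lam 3" unfolding r1_def r2_def r3_def by (simp_all add: algebra_simps)
    have dd: "lam 2 \<noteq> lam 1" "lam 2 \<noteq> lam 3" "lam 1 \<noteq> lam 3" using d by auto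
    show "?Ac ** Pi 2 = cscale (lam 2) (Pi 2)" "trace (Pi 2) = 2"
      unfolding Pi_def
      by (rule Pi_eig[OF A3 r dd l22 l21 l23 t1 t2])+
  qed
  have E3: "?Ac ** Pi 3 = cscale (lam 3) (Pi 3)" "trace (Pi 3) = 2"
  proof -
    have r: "r1 = lam 3 + lam 1 + lam 2" "r2 = lam 3 * lam 1 + lam 3 * lam 2 + lam 1 * lam 2"
      "r3 = lam 3 * lam 1 * lam 2" unfolding r1_def r2_def r3_def by (simp_all add: algebra_simps)
    have dd: "lam 3 \<noteq> lam 1" "lam 3 \<noteq> lam 2" "lam 1 \<noteq> lam 2" using d by auto
    show "?Ac ** Pi 3 = cscale (lam 3) (Pi 3)" "trace (Pi 3) = 2"
      unfolding Pi_def
      by (rule Pi_eig[OF A3 r dd l33 l31 l32 t1 t2])+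
  qed
  have BPm: "B j = Pm ?Ac (\<alpha> j) (\<beta> j) (\<gamma> j)" for j
    unfolding B_def Bmat_def Pm_def by (simp add: cpx_mul)
  have Bj: "B j = mat 1 - cscale 2 (Pi j)" for j
  proof -
    have "mat 1 - cscale 2 (Pi j) = Pm ?Ac (1 - 2 * ((1 - \<alpha> j)/2)) (0 - 2 * (- \<beta> j/2)) (0 - 2 * (- \<gamma> j/2))"
      unfolding Pi_def by (subst Pm_I[of ?Ac]) (simp only: Pm_cs Pm_diff)
    also have "\<dots> = B j"
    proof -
      have a: "1 - 2 * ((1 - \<alpha> j)/2) = \<alpha> j" by (simp add: field_simps)
      have b: "0 - 2 * (- \<beta> j/2) = \<beta> j" by simp
      have c: "0 - 2 * (- \<gamma> j/2) = \<gamma> j" by simp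
      show ?thesis by (simp only: a b c BPm)
    qed
    finally show ?thesis by simp
  qed
  have sumP: "Pi 1 + Pi 2 + Pi 3 = mat 1"
  proof -
    have "Pi 1 + Pi 2 + Pi 3 = Pm ?Ac ((1 - \<alpha> 1)/2 + (1 - \<alpha> 2)/2 + (1 - \<alpha> 3)/2)
        (- \<beta> 1/2 + - \<beta> 2/2 + - \<beta> 3/2) (- \<gamma> 1/2 + - \<gamma> 2/2 + - \<gamma> 3/2)"
      unfolding Pi_def by (simp only: Pm_add)
    also have "\<dots> = Pm ?Ac 1 0 0"
    proof -
      have "(1 - \<alpha> 1)/2 + (1 - \<alpha> 2)/2 + (1 - \<alpha> 3)/2 = (3 - (\<alpha> 1 + \<alpha> 2 + \<alpha> 3))/2" by (simp add: field_simps)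
      also have "\<dots> = 1" using I1(1) by simp
      finally have a: "(1 - \<alpha> 1)/2 + (1 - \<alpha> 2)/2 + (1 - \<alpha> 3)/2 = 1" .
      have b: "- \<beta> 1/2 + - \<beta> 2/2 + - \<beta> 3/2 = 0"
        using I1(2) by (metis add.commute add_divide_distrib divide_eq_0_iff minus_add_distrib neg_equal_0_iff_equal)
      have c: "- \<gamma> 1/2 + - \<gamma> 2/2 + - \<gamma> 3/2 = 0"
        using I1(3) by (metis add.commute add_divide_distrib divide_eq_0_iff minus_add_distrib neg_equal_0_iff_equal)
      show ?thesis by (simp only: a b c)
    qed
    finally show ?thesis by (simp add: Pm_I[symmetric])
  qed
  have skP: "skH (Pi j)" for j unfolding Pi_def by (rule Pm_skH[OF skA])
  have qnz1: "3 * (lam 1)^2 - 2 * r1 * lam 1 + r2 \<noteq> 0"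
  proof -
    have "3 * (lam 1)^2 - 2 * r1 * lam 1 + r2 = (lam 1 - lam 2) * (lam 1 - lam 3)"
      unfolding r1_def r2_def by algebra
    thus ?thesis using d by simp
  qed
  have qnz2: "3 * (lam 2)^2 - 2 * r1 * lam 2 + r2 \<noteq> 0"
  proof -
    have "3 * (lam 2)^2 - 2 * r1 * lam 2 + r2 = (lam 2 - lam 1) * (lam 2 - lam 3)"
      unfolding r1_def r2_def by algebra
    thus ?thesis using d by simp
  qed
  have qnz3: "3 * (lam 3)^2 - 2 * r1 * lam 3 + r2 \<noteq> 0"
  proof -
    have "3 * (lam 3)^2 - 2 * r1 * lam 3 + r2 = (lam 3 - lam 1) * (lam 3 - lam 2)"
      unfolding r1_def r2_def by algebra
    thus ?thesis using d by simp
  qed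
  have perx: "\<exists>N c1 c2 c3. cpx (f0' H0 x ** f0' H0 x) = transpose N
     \<and> N ** Pi 1 = cscale c1 (Pi 1) \<and> N ** Pi 2 = cscale c2 (Pi 2) \<and> N ** Pi 3 = cscale c3 (Pi 3)
     \<and> Pi 1 ** N = N ** Pi 1 \<and> Pi 2 ** N = N ** Pi 2 \<and> Pi 3 ** N = N ** Pi 3
     \<and> (\<forall>i. q i x = trace (N ** B i) / 8)" for x
  proof -
    define S where "S = hesse H0 x"
    define Sc where "Sc = cpx S"
    have M: "f0' H0 x = Jmat ** S" unfolding S_def by (rule f0'_eq[OF cubic])
    have sym: "transpose Sc = Sc" unfolding Sc_def S_def by (simp add: cpx_transpose[symmetric] hesse_sym[OF cubic])
    have com: "?Ac ** Sc = Sc ** transpose ?Ac" unfolding Sc_def S_def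
      by (metis commute cpx_mul cpx_transpose)
    have sk: "transpose ?Ac ** Jmat = Jmat ** ?Ac" using skA unfolding skH_def .
    define N where "N = Sc ** Jmat ** Sc ** Jmat"
    note NS = N_struct[OF sym com sk, folded N_def]
    have MN: "cpx (f0' H0 x ** f0' H0 x) = transpose N"
      unfolding NS(3) M Sc_def by (simp add: cpx_mul cpx_J)
    obtain c1 where c1: "N ** Pi 1 = cscale c1 (Pi 1)" using N_Pi[OF skA NS(1) NS(2) E1(1) t1 t2 qnz1] by blast
    obtain c2 where c2: "N ** Pi 2 = cscale c2 (Pi 2)" using N_Pi[OF skA NS(1) NS(2) E2(1) t1 t2 qnz2] by blast
    obtain c3 where c3: "N ** Pi 3 = cscale c3 (Pi 3)" using N_Pi[OF skA NS(1) NS(2) E3(1) t1 t2 qnz3] by blast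
    have PN: "Pi j ** N = N ** Pi j" for j unfolding Pi_def by (rule Pm_comm[OF NS(2)])
    have qt: "q i x = trace (N ** B i) / 8" for i
    proof -
      have "q i x = trace (transpose (B i) ** transpose N) / 8"
        unfolding q_def qfun_def B_def MN ..
      also have "\<dots> = trace (N ** B i) / 8"
        by (simp add: matrix_transpose_mul[symmetric] trace_transpose)
      finally show ?thesis .
    qed
    show ?thesis using MN c1 c2 c3 PN qt by blast
  qed
  have trNP: "trace (N ** (B j + B k)) = 4 * c" if "N ** Pi l = cscale c (Pi l)" "trace (Pi l) = 2"
     "B j + B k = cscale 2 (Pi l)" for N j k l c
    using that by (simp add: cs_mul_right trace_cs)
  have B23: "B 2 + B 3 = cscale 2 (Pi 1)" and B13: "B 1 + B 3 = cscale 2 (Pi 2)"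
    and B12: "B 1 + B 2 = cscale 2 (Pi 3)"
  proof -
    have ent: "\<And>i k. Pi 1 $ i $ k + Pi 2 $ i $ k + Pi 3 $ i $ k = mat 1 $ i $ k"
      using sumP by (metis vector_add_component)
    show "B 2 + B 3 = cscale 2 (Pi 1)" unfolding Bj sumP[symmetric] vec_eq_iff cscale_def
      by (simp add: algebra_simps)
    show "B 1 + B 3 = cscale 2 (Pi 2)" unfolding Bj sumP[symmetric] vec_eq_iff cscale_def
      by (simp add: algebra_simps)
    show "B 1 + B 2 = cscale 2 (Pi 3)" unfolding Bj sumP[symmetric] vec_eq_iff cscale_def
      by (simp add: algebra_simps)
  qed
  have B123: "B 1 + B 2 + B 3 = mat 1"
  proof -
    have ent: "\<And>i k. Pi 1 $ i $ k + Pi 2 $ i $ k + Pi 3 $ i $ k = mat 1 $ i $ k"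
      using sumP by (metis vector_add_component)
    show ?thesis unfolding Bj sumP[symmetric] vec_eq_iff cscale_def
      by (simp add: algebra_simps)
  qed
  show ?thesis
  proof (intro conjI allI impI)
    fix x
    obtain N c1 c2 c3 where N: "cpx (f0' H0 x ** f0' H0 x) = transpose N"
      and qt: "\<And>i. q i x = trace (N ** B i) / 8"
      using perx[of x] by blast
    have "q 1 x + q 2 x + q 3 x = trace (N ** (B 1 + B 2 + B 3)) / 8"
      unfolding qt by (simp add: matrix_add_ldistrib trace_add add_divide_distrib)
    also have "\<dots> = trace N / 8"
      by (simp only: B123 matrix_mul_rid)
    also have "\<dots> = complex_of_real (p0 H0 x)"
      by (metis N trace_transpose trace_cpx p0_def of_real_divide of_real_numeral)
    finally show "complex_of_real (p0 H0 x) = q 1 x + q 2 x + q 3 x" by simp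
  next
    fix \<epsilon> :: real and x
    assume eps: "\<epsilon> \<noteq> 0"
    obtain N c1 c2 c3 where N: "cpx (f0' H0 x ** f0' H0 x) = transpose N"
      and NP: "N ** Pi 1 = cscale c1 (Pi 1)" "N ** Pi 2 = cscale c2 (Pi 2)" "N ** Pi 3 = cscale c3 (Pi 3)"
      and PN: "Pi 1 ** N = N ** Pi 1" "Pi 2 ** N = N ** Pi 2" "Pi 3 ** N = N ** Pi 3"
      and qt: "\<And>i. q i x = trace (N ** B i) / 8"
      using perx[of x] by blast
    have qc: "q 2 x + q 3 x = c1/2" "q 1 x + q 3 x = c2/2" "q 1 x + q 2 x = c3/2"
    proof -
      have "q 2 x + q 3 x = trace (N ** (B 2 + B 3)) / 8"
        unfolding qt by (simp add: matrix_add_ldistrib trace_add add_divide_distrib)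
      also have "\<dots> = 4 * c1 / 8" by (simp only: trNP[OF NP(1) E1(2) B23])
      also have "\<dots> = c1/2" by simp
      finally show "q 2 x + q 3 x = c1/2" .
      have "q 1 x + q 3 x = trace (N ** (B 1 + B 3)) / 8"
        unfolding qt by (simp add: matrix_add_ldistrib trace_add add_divide_distrib)
      also have "\<dots> = 4 * c2 / 8" by (simp only: trNP[OF NP(2) E2(2) B13])
      also have "\<dots> = c2/2" by simp
      finally show "q 1 x + q 3 x = c2/2" .
      have "q 1 x + q 2 x = trace (N ** (B 1 + B 2)) / 8"
        unfolding qt by (simp add: matrix_add_ldistrib trace_add add_divide_distrib)
      also have "\<dots> = 4 * c3 / 8" by (simp only: trNP[OF NP(3) E3(2) B12])
      also have "\<dots> = c3/2" by simp
      finally show "q 1 x + q 2 x = c3/2" .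
    qed
    show "let e2 = complex_of_real (\<epsilon>^2);
           s0 = 1;
           s1 = 1 - 2 * e2 * (q 2 x + q 3 x);
           s2 = 1 - 2 * e2 * (q 1 x + q 3 x);
           s3 = 1 - 2 * e2 * (q 1 x + q 2 x);
           P0 = (1/s0 + 1/s1 + 1/s2 + 1/s3) / 4;
           Q1 = (- 1/s0 - 1/s1 + 1/s2 + 1/s3) / (4 * e2);
           Q2 = (- 1/s0 + 1/s1 - 1/s2 + 1/s3) / (4 * e2);
           Q3 = (- 1/s0 + 1/s1 + 1/s2 - 1/s3) / (4 * e2);
           Pi = Jmat - (\<epsilon>^2) *\<^sub>R (f0' H0 x ** f0' H0 x ** Jmat)
       in s1 * s2 * s3 \<noteq> 0 \<longrightarrow>
          invertible Pi \<and>
          cpx (matrix_inv Pi) =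
            cscale (- P0) Jmat
            - cscale e2 (cscale Q1 (B 1 ** Jmat) + cscale Q2 (B 2 ** Jmat) + cscale Q3 (B 3 ** Jmat))"
      by (rule final[OF eps N Bj Bj Bj sumP NP PN skP skP skP qc])
  qed
qed

end
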